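(* Let $E,m>0$, $\ell_z\in\mathbb{R}$, $\ell\ge 0$, and let $(x,p)\in\Gamma$ be a point with $F_0(x,p)=\tfrac12m^2$, $F_1(x,p)=E$, $F_2(x,p)=\ell_z$, $F_3(x,p)=\ell^2$, where $x$ has radial coordinate $r$. Then the differentials $dF_0,dF_1,dF_2,dF_3$ at $(x,p)$ are linearly independent, unless one of the following two cases occurs: (a) $|\ell_z|=\ell$ (motion confined to the equatorial plane); (b) $V_{m,\ell}(r)=E^2$ and $\frac{d}{dr}V_{m,\ell}(r)=0$ (circular trajectories).
   Context: Fix $M_H>0$. Let $M$ be the region of the extended Schwarzschild spacetime covered by horizon-penetrating coordinates $(t,r,\vartheta,\varphi)$, $t\in\mathbb{R}$, $r>0$, in which the inverse metric is $g^{-1}=-(1+\tfrac{2M_H}{r})\partial_t\otimes\partial_t+\tfrac{4M_H}{r}\partial_t\otimes_s\partial_r+(1-\tfrac{2M_H}{r})\partial_r\otimes\partial_r+\tfrac{1}{r^2}(\partial_\vartheta\otimes\partial_\vartheta+\tfrac{1}{\sin^2\vartheta}\partial_\varphi\otimes\partial_\varphi)$. On $T^*M$ use adapted coordinates $(x^\mu,p_\mu)$ with $p=p_\mu dx^\mu$. The free-particle Hamiltonian is $H=\tfrac12 g^{\mu\nu}p_\mu p_\nu$; $\Gamma$ is the set of $(x,p)\in T^*M$ with $p$ timelike and future-directed. Define $F_0=-H$, $F_1=-p_t$, $F_2=p_\varphi$, $F_3=p_\vartheta^2+p_\varphi^2/\sin^2\vartheta$, and $V_{m,\ell}(r)=(1-2M_H/r)(m^2+\ell^2/r^2)$.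 *)

theory Defs
  imports "HOL-Analysis.Analysis"
begin

text \<open>A point of the cotangent bundle in adapted coordinates:
  ((t, r, theta, phi), (p_t, p_r, p_theta, p_phi)).\<close>
type_synonym phase_point = "(real \<times> real \<times> real \<times> real) \<times> (real \<times> real \<times> real \<times> real)"

text \<open>Inverse metric g^{-1}(p,q) at a point with radial coordinate r and polar angle th.
  The symmetrised product is a \<otimes>_s b = (a\<otimes>b + b\<otimes>a)/2, so g^{tr} = 2 MH / r.\<close>
definition ginv :: "real \<Rightarrow> real \<Rightarrow> real \<Rightarrow> real \<times> real \<times> real \<times> real \<Rightarrow> real \<times> real \<times> real \<times> real \<Rightarrow> real" where
  "ginv MH r th p q = (case p of (pt, pr, pth, pph) \<Rightarrow> case q of (qt, qr, qth, qph) \<Rightarrow>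
      - (1 + 2 * MH / r) * pt * qt + (2 * MH / r) * (pt * qr + pr * qt)
      + (1 - 2 * MH / r) * pr * qr + (1 / r^2) * (pth * qth + pph * qph / (sin th)^2))"

definition radial :: "phase_point \<Rightarrow> real" where
  "radial z = fst (snd (fst z))"

definition polar :: "phase_point \<Rightarrow> real" where
  "polar z = fst (snd (snd (fst z)))"

definition Ham :: "real \<Rightarrow> phase_point \<Rightarrow> real" where
  "Ham MH z = ginv MH (radial z) (polar z) (snd z) (snd z) / 2"

text \<open>Gamma: p timelike and future-directed; future-directed means that the vector
  p^sharp satisfies dt(p^sharp) = g^{-1}(p, dt) > 0 (t increases to the future).\<close>
definition Gamma :: "real \<Rightarrow> phase_point set" where
  "Gamma MH = {z. radial z > 0 \<and> 0 < polar z \<and> polar z < pi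
      \<and> ginv MH (radial z) (polar z) (snd z) (snd z) < 0
      \<and> ginv MH (radial z) (polar z) (snd z) (1, 0, 0, 0) > 0}"

definition F0 :: "real \<Rightarrow> phase_point \<Rightarrow> real" where
  "F0 MH z = - Ham MH z"

definition F1 :: "phase_point \<Rightarrow> real" where
  "F1 z = - fst (snd z)"

definition F2 :: "phase_point \<Rightarrow> real" where
  "F2 z = snd (snd (snd (snd z)))"

definition F3 :: "phase_point \<Rightarrow> real" where
  "F3 z = (case snd z of (pt, pr, pth, pph) \<Rightarrow> pth^2 + pph^2 / (sin (polar z))^2)"

definition V :: "real \<Rightarrow> real \<Rightarrow> real \<Rightarrow> real \<Rightarrow> real" where
  "V MH m l r = (1 - 2 * MH / r) * (m^2 + l^2 / r^2)"

end

theory Submission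
  imports Defs
begin

lemma F0_eq: "F0 MH z = -( -(1+2*MH/fst(snd(fst z)))*(fst(snd z))^2
   + (4*MH/fst(snd(fst z)))*fst(snd z)*fst(snd(snd z))
   + (1-2*MH/fst(snd(fst z)))*(fst(snd(snd z)))^2
   + (1/(fst(snd(fst z)))^2)*((fst(snd(snd(snd z))))^2 + (snd(snd(snd(snd z))))^2/(sin (fst(snd(snd(fst z)))))^2))/2"
  by (cases z) (simp add: F0_def Ham_def ginv_def radial_def polar_def power2_eq_square add_divide_distrib diff_divide_distrib ring_distribs)

lemma F3_eq: "F3 z = (fst(snd(snd(snd z))))^2 + (snd(snd(snd(snd z))))^2/(sin (fst(snd(snd(fst z)))))^2"
  by (cases z) (auto simp: F3_def polar_def)

lemma dF0:
  fixes z :: phase_point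
  assumes "fst(snd(fst z)) \<noteq> 0" "sin (fst(snd(snd(fst z)))) \<noteq> 0"
  shows "(F0 MH has_derivative (\<lambda>v. -(
    fst(snd(fst v)) * ((2*MH/(fst(snd(fst z)))^2)*(fst(snd z))^2 - (4*MH/(fst(snd(fst z)))^2)*fst(snd z)*fst(snd(snd z))
        + (2*MH/(fst(snd(fst z)))^2)*(fst(snd(snd z)))^2
        - 2*((fst(snd(snd(snd z))))^2 + (snd(snd(snd(snd z))))^2/(sin (fst(snd(snd(fst z)))))^2)/(fst(snd(fst z)))^3)
  + fst(snd(snd(fst v))) * ((snd(snd(snd(snd z))))^2 * (-2 * cos (fst(snd(snd(fst z)))) / (sin (fst(snd(snd(fst z)))))^3) / (fst(snd(fst z)))^2)
  + fst(snd v) * (-2*(1+2*MH/fst(snd(fst z)))*fst(snd z) + (4*MH/fst(snd(fst z)))*fst(snd(snd z)))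
  + fst(snd(snd v)) * ((4*MH/fst(snd(fst z)))*fst(snd z) + 2*(1-2*MH/fst(snd(fst z)))*fst(snd(snd z)))
  + fst(snd(snd(snd v))) * (2*fst(snd(snd(snd z)))/(fst(snd(fst z)))^2)
  + snd(snd(snd(snd v))) * (2* snd(snd(snd(snd z)))/((fst(snd(fst z)))^2*(sin (fst(snd(snd(fst z)))))^2)))/2)) (at z)"
  unfolding F0_eq[abs_def]
  apply (rule has_derivative_eq_rhs)
   apply (rule derivative_eq_intros refl | simp add: assms)+
  using assms
  apply (auto simp: fun_eq_iff field_simps power2_eq_square power3_eq_cube)
  done

lemma dF1: "(F1 has_derivative (\<lambda>v. - fst (snd v))) (at z)"
  unfolding F1_def[abs_def] by (rule derivative_eq_intros refl)+

lemma dF2: "(F2 has_derivative (\<lambda>v. snd(snd(snd(snd v))))) (at z)"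
  unfolding F2_def[abs_def] by (rule derivative_eq_intros refl)+

lemma dF3:
  fixes z :: phase_point
  assumes "sin (fst(snd(snd(fst z)))) \<noteq> 0"
  shows "(F3 has_derivative (\<lambda>v. 2*fst(snd(snd(snd z)))*fst(snd(snd(snd v)))
     + 2 * snd(snd(snd(snd z))) * snd(snd(snd(snd v))) / (sin (fst(snd(snd(fst z)))))^2
     - 2 * (snd(snd(snd(snd z))))^2 * cos (fst(snd(snd(fst z)))) * fst(snd(snd(fst v))) / (sin (fst(snd(snd(fst z)))))^3)) (at z)"
  unfolding F3_eq[abs_def]
  apply (rule has_derivative_eq_rhs)
   apply (rule derivative_eq_intros refl | simp add: assms)+
  using assms
  apply (auto simp: fun_eq_iff field_simps power2_eq_square power3_eq_cube)
  done

lemma dV: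
  assumes "r \<noteq> 0"
  shows "(V MH m l has_real_derivative
     ((2*MH/r^2)*(m^2 + l^2/r^2) + (1 - 2*MH/r)*(-2*l^2/r^3))) (at r)"
  unfolding V_def[abs_def]
  apply (rule DERIV_cong)
   apply (rule derivative_eq_intros refl | simp add: assms)+
  using assms
  apply (auto simp: field_simps eval_nat_numeral)
  done

theorem lemma2:
  fixes MH E m lz l :: real and z :: phase_point
  assumes "MH > 0" "E > 0" "m > 0" "l \<ge> 0"
    and "z \<in> Gamma MH"
    and "F0 MH z = m^2 / 2" "F1 z = E" "F2 z = lz" "F3 z = l^2"
    and not_equatorial: "\<bar>lz\<bar> \<noteq> l"
    and not_circular: "\<not> (V MH m l (radial z) = E^2 \<and> deriv (V MH m l) (radial z) = 0)"
  shows "F0 MH differentiable at z \<and> F1 differentiable at z \<and>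
         F2 differentiable at z \<and> F3 differentiable at z \<and>
         (\<forall>c0 c1 c2 c3 :: real.
            (\<forall>v. c0 * frechet_derivative (F0 MH) (at z) v + c1 * frechet_derivative F1 (at z) v
                 + c2 * frechet_derivative F2 (at z) v + c3 * frechet_derivative F3 (at z) v = 0)
            \<longrightarrow> c0 = 0 \<and> c1 = 0 \<and> c2 = 0 \<and> c3 = 0)"
proof -
  obtain t r th ph pt pr pth pph where z: "z = ((t,r,th,ph),(pt,pr,pth,pph))"
    by (cases z) auto
  have r: "r > 0" and th: "0 < th" "th < pi"
    using assms(5) by (auto simp: Gamma_def z radial_def polar_def)
  have s: "sin th > 0" using th by (simp add: sin_gt_zero)
  have rad: "radial z = r" by (simp add: z radial_def)
  have e0: "-( -(1+2*MH/r)*pt^2 + (4*MH/r)*pt*pr + (1-2*MH/r)*pr^2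
     + (1/r^2)*(pth^2 + pph^2/(sin th)^2))/2 = m^2/2"
    using assms(6) by (simp add: F0_eq z)
  have e1: "pt = -E" using assms(7) by (simp add: F1_def z)
  have e2: "pph = lz" using assms(8) by (simp add: F2_def z)
  have e3: "pth^2 + pph^2/(sin th)^2 = l^2" using assms(9) by (simp add: F3_eq z)
  have rz: "fst(snd(fst z)) \<noteq> 0" "sin (fst(snd(snd(fst z)))) \<noteq> 0" using r s by (auto simp: z)
  note h0 = dF0[OF rz, of MH] and h1 = dF1[of z] and h2 = dF2[of z] and h3 = dF3[OF rz(2)]
  note fd = frechet_derivative_at[OF h0, symmetric] frechet_derivative_at[OF h1, symmetric]
     frechet_derivative_at[OF h2, symmetric] frechet_derivative_at[OF h3, symmetric]
  have diff: "F0 MH differentiable at z \<and> F1 differentiable at z \<and>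
         F2 differentiable at z \<and> F3 differentiable at z"
    using h0 h1 h2 h3 by (auto intro: differentiableI)
  {
    fix c0 c1 c2 c3 :: real
    assume H0: "\<forall>v. c0 * frechet_derivative (F0 MH) (at z) v + c1 * frechet_derivative F1 (at z) v
                 + c2 * frechet_derivative F2 (at z) v + c3 * frechet_derivative F3 (at z) v = 0"
    note H = H0[unfolded fd]
    have Hr: "c0 * ((2*MH/r^2)*pt^2 - (4*MH/r^2)*pt*pr + (2*MH/r^2)*pr^2
        - 2*(pth^2 + pph^2/(sin th)^2)/r^3) = 0"
      using spec[OF H, of "((0,1,0,0),(0,0,0,0))"] by (auto simp: z)
    have Hpr: "c0 * ((4*MH/r)*pt + 2*(1-2*MH/r)*pr) = 0"
      using spec[OF H, of "((0,0,0,0),(0,1,0,0))"] by (auto simp: z)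
    have Hpt: "c0 * (-2*(1+2*MH/r)*pt + (4*MH/r)*pr)/2 + c1 = 0"
      using spec[OF H, of "((0,0,0,0),(1,0,0,0))"] by (auto simp: z algebra_simps)
    have Hpth: "c0 * (pth/r^2) = c3 * 2 * pth"
      using spec[OF H, of "((0,0,0,0),(0,0,1,0))"] by (auto simp: z)
    have Hth: "c0 * (pph^2 * cos th / (sin th^3 * r^2)) = c3 * 2 * pph^2 * cos th / sin th ^3"
      using spec[OF H, of "((0,0,1,0),(0,0,0,0))"] by (auto simp: z)
    have Hpph: "- c0 * pph / (r^2 * sin th ^2) + c2 + c3 * 2 * pph / sin th ^2 = 0"
      using spec[OF H, of "((0,0,0,0),(0,0,0,1))"] by (auto simp: z)
    have "c0 = 0"
    proof (rule ccontr)
      assume c0: "c0 \<noteq> 0"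
      define a where "a = 2*MH/r"
      define f where "f = 1 - a"
      define L where "L = l^2"
      have a_pos: "a > 0" using r assms(1) by (simp add: a_def)
      have Ar: "a/r*(E+pr)^2 = 2*L/r^3"
      proof -
        have "(2*MH/r^2)*pt^2 - (4*MH/r^2)*pt*pr + (2*MH/r^2)*pr^2 - 2*l^2/r^3 = 0"
          using Hr c0 unfolding e3 by simp
        then show ?thesis using e1 r unfolding a_def L_def
          by (auto simp: field_simps power2_eq_square)
      qed
      have Apr: "f*pr = a*E"
      proof -
        have "(4*MH/r)*pt + 2*(1-2*MH/r)*pr = 0" using Hpr c0 by simp
        moreover have "f*pr - a*E = ((4*MH/r)*pt + 2*(1-2*MH/r)*pr)/2"
          using e1 r unfolding a_def f_def by (simp add: field_simps)
        ultimately show ?thesis by simp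
      qed
      have E0: "m^2 + L/r^2 = (1+a)*E^2 + 2*a*E*pr - f*pr^2"
      proof -
        have "-(1+2*MH/r)*pt^2 + (4*MH/r)*pt*pr + (1-2*MH/r)*pr^2 + (1/r^2)*l^2 = - (m^2)"
          using e0 unfolding e3 by simp
        moreover have "4*MH/r = 2*a" "2*MH/r = a" by (simp_all add: a_def)
        ultimately have "-(1+a)*pt^2 + (2*a)*pt*pr + (1-a)*pr^2 + l^2/r^2 = - (m^2)" by simp
        then show ?thesis using e1 unfolding f_def L_def
          by (simp add: algebra_simps power2_eq_square)
      qed
      have VE: "f*(m^2 + L/r^2) = E^2"
      proof -
        have "f*(m^2 + L/r^2) = f*(1+a)*E^2 + 2*a*E*(f*pr) - (f*pr)^2"
          unfolding E0 by (simp add: algebra_simps power2_eq_square)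
        also have "\<dots> = (1-a)*(1+a)*E^2 + 2*a*E*(a*E) - (a*E)^2" by (simp only: Apr) (simp add: f_def)
        also have "\<dots> = E^2" by (simp add: algebra_simps power2_eq_square)
        finally show ?thesis .
      qed
      have fnz: "f \<noteq> 0" using Apr a_pos assms(2) by auto
      have fE: "f*(E+pr) = E" using Apr unfolding f_def by (simp add: algebra_simps)
      have "a/r*E^2 = f^2 * (a/r*(E+pr)^2)"
        by (subst fE[symmetric]) (simp add: algebra_simps power2_eq_square)
      also have "\<dots> = f^2*(2*L/r^3)" by (simp only: Ar)
      finally have K: "a/r*E^2 = f^2*(2*L/r^3)" .
      define V' where "V' = (2*MH/r^2)*(m^2 + l^2/r^2) + (1 - 2*MH/r)*(-2*l^2/r^3)"
      have V'eq: "V' = a/r*(m^2 + L/r^2) - f*(2*L/r^3)"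
        unfolding V'_def a_def f_def L_def using r by (simp add: field_simps power2_eq_square)
      have "f*V' = a/r*(f*(m^2 + L/r^2)) - f^2*(2*L/r^3)"
        unfolding V'eq by (simp add: algebra_simps power2_eq_square)
      also have "\<dots> = 0" unfolding VE K by simp
      finally have "V' = 0" using fnz by simp
      moreover have "deriv (V MH m l) r = V'"
        unfolding V'_def by (rule DERIV_imp_deriv[OF dV]) (use r in simp)
      moreover have "V MH m l r = E^2"
        using VE unfolding V_def f_def a_def L_def by simp
      ultimately show False using not_circular rad by simp
    qed
    moreover have "c3 = 0"
    proof (rule ccontr)
      assume c3: "c3 \<noteq> 0"
      have p0: "pth = 0" using Hpth c3 \<open>c0 = 0\<close> by simp
      have "pph^2 * cos th = 0" using Hth c3 \<open>c0 = 0\<close> s by (simp add: field_simps)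
      then consider "pph = 0" | "cos th = 0" by auto
      then show False
      proof cases
        case 1
        then have "l = 0" using e3 p0 assms(4) by simp
        then show False using not_equatorial e2 1 by simp
      next
        case 2
        then have "(sin th)^2 = 1" using sin_cos_squared_add[of th] by simp
        then have "l^2 = lz^2" using e3 p0 e2 by simp
        then have "l = \<bar>lz\<bar>" using assms(4)
          by (metis abs_ge_zero power2_abs power2_eq_iff_nonneg)
        then show False using not_equatorial by simp
      qed
    qed
    ultimately have "c0 = 0 \<and> c1 = 0 \<and> c2 = 0 \<and> c3 = 0"
      using Hpt Hpph by simp
  }
  with diff show ?thesis by blast
qed
end
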